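(* Consider the cyclic-schedule model in the context and fix a source $n$ with $p_n<1$. Then the long-run average of $\tilde S_{n,k}$ (the limit, almost surely, of $\frac1K'\sum_{k=1}^{K'}\tilde S_{n,k}$ as $K'\to\infty$), denoted $\tilde s_n$, satisfies $$\tilde s_n=\frac{1}{u_n}\Big(p_n s_n+\frac{1}{\alpha_n}\sum_{k=1}^{\alpha_n}s_{n,k-1}\Big)=\frac{1}{u_n}\Big(p_n s_n+\frac{1}{\alpha_n}\sum_{m\neq n}\alpha_m s_m\Big)=\frac{s_n}{u_n\tau_n}-s_n,$$ where $\tau_n=\frac{\alpha_n s_n}{\sum_{m=1}^N\alpha_m s_m}$ is the long-run fraction of time the channel is occupied by (successful or unsuccessful) source-$n$ transmissions.
   Context: Cyclic-schedule model: There are $N$ sources. A pattern $P=[P_0,\dots,P_{K-1}]$ with $P_k\in\{1,\dots,N\}$ is fixed, in which source $n$ appears $\alpha_n\ge 1$ times. Transmissions occur back-to-back; the $t$-th transmission ($t=0,1,2,\dots$) is from source $P_{t\bmod K}$. Service (transmission) times are mutually independent, and those of source $m$ are i.i.d. copies of a random variable $S_m$ with finite mean $s_m$ and finite second moment. Each transmission of source $m$ independently fails (packet drop) with probability $p_m\in[0,1)$ and succeeds with probability $u_m=1-p_m$. $\tilde S_{n,k}$ is the total time between the end of the $k$-th successful source-$n$ transmission and the beginning of the $(k+1)$-th successful source-$n$ transmission (i.e. the sum of service times of all transmissions strictly between them, including failed source-$n$ transmissions). For $k=0,\dots,\alpha_n-1$, $s_{n,k}$ is the sum of the mean service times $s_m$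 of the pattern entries strictly between the $k$-th and $(k+1)$-th appearances of source $n$ in $P$ (cyclically, the last gap wrapping around to the first appearance). *)

theory Defs
  imports "HOL-Probability.Probability"
begin

definition alpha :: "nat list \<Rightarrow> nat \<Rightarrow> nat" where
  "alpha P m = length (filter (\<lambda>x. x = m) P)"

definition positions :: "nat list \<Rightarrow> nat \<Rightarrow> nat list" where
  "positions P n = filter (\<lambda>j. P ! j = n) [0..<length P]"

text \<open>s_{n,k}, k = 0..alpha_n - 1: sum of the mean service times of the pattern entries strictly
  between the k-th and (k+1)-th appearance of n (cyclically, last gap wraps around).\<close>
definition gap_mean :: "nat list \<Rightarrow> (nat \<Rightarrow> real) \<Rightarrow> nat \<Rightarrow> nat \<Rightarrow> real" where
  "gap_mean P s n k =
     (let js = positions P n; K = length P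
      in (\<Sum>j\<in>{js ! k <..< (if Suc k < length js then js ! Suc k else js ! 0 + K)}.
            s (P ! (j mod K))))"

definition succ_set :: "nat list \<Rightarrow> (nat \<Rightarrow> 'a \<Rightarrow> bool) \<Rightarrow> nat \<Rightarrow> 'a \<Rightarrow> nat set" where
  "succ_set P D n \<omega> = {t. P ! (t mod length P) = n \<and> D t \<omega>}"

text \<open>Stilde_{n,k} (k \<ge> 1): total service time of all transmissions strictly between the
  k-th and (k+1)-th successful source-n transmission (enumerate is 0-based).\<close>
definition Stilde :: "nat list \<Rightarrow> (nat \<Rightarrow> 'a \<Rightarrow> real) \<Rightarrow> (nat \<Rightarrow> 'a \<Rightarrow> bool) \<Rightarrow> nat \<Rightarrow> nat \<Rightarrow> 'a \<Rightarrow> real" where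
  "Stilde P S D n k \<omega> =
     (\<Sum>t\<in>{enumerate (succ_set P D n \<omega>) (k - 1) <..< enumerate (succ_set P D n \<omega>) k}. S t \<omega>)"

end

theory Submission
  imports Defs "HOL-Real_Asymp.Real_Asymp" "HOL-Library.Discrete_Functions"
begin

lemma floor_sqrt_at_top: "filterlim floor_sqrt at_top at_top"
  unfolding filterlim_at_top
proof (intro allI)
  fix Z :: nat
  show "eventually (\<lambda>x. Z \<le> floor_sqrt x) at_top"
    unfolding eventually_at_top_linorder
    by (rule exI[of _ "Z^2"]) (auto intro: le_floor_sqrtI)
qed

lemma sq_sandwich:
  fixes R :: "nat \<Rightarrow> real"
  assumes mono: "\<And>a b. a \<le> b \<Longrightarrow> R a \<le> R b"
    and nn: "\<And>a. 0 \<le> R a"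
    and lim: "(\<lambda>j. R ((Suc j)^2) / real ((Suc j)^2)) \<longlonglongrightarrow> \<mu>"
  shows "(\<lambda>T. R T / real T) \<longlonglongrightarrow> \<mu>"
proof -
  define a where "a j = R ((Suc j)^2) / real ((Suc j)^2)" for j
  define l where "l j = a j * ((real j + 1)^2 / (real j + 2)^2)" for j
  define u where "u j = a (Suc j) * ((real j + 2)^2 / (real j + 1)^2)" for j
  have r1: "(\<lambda>j. (real j + 1)^2 / (real j + 2)^2) \<longlonglongrightarrow> 1" by real_asymp
  have r2: "(\<lambda>j. (real j + 2)^2 / (real j + 1)^2) \<longlonglongrightarrow> 1" by real_asymp
  have la: "a \<longlonglongrightarrow> \<mu>" using lim unfolding a_def .
  have l: "l \<longlonglongrightarrow> \<mu>" unfolding l_def using tendsto_mult[OF la r1] by simp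
  have u: "u \<longlonglongrightarrow> \<mu>" unfolding u_def using tendsto_mult[OF LIMSEQ_Suc[OF la] r2] by simp
  define J where "J T = floor_sqrt T - 1" for T
  have JT: "filterlim J at_top at_top"
  proof -
    have "filterlim (\<lambda>T. floor_sqrt T - 1) at_top at_top"
      using floor_sqrt_at_top
      by (rule filterlim_compose[OF filterlim_minus_const_nat_at_top])
    then show ?thesis unfolding J_def .
  qed
  have L: "(\<lambda>T. l (J T)) \<longlonglongrightarrow> \<mu>" using filterlim_compose[OF l JT] .
  have U: "(\<lambda>T. u (J T)) \<longlonglongrightarrow> \<mu>" using filterlim_compose[OF u JT] .
  show ?thesis
  proof (rule tendsto_sandwich[OF _ _ L U])
    show "eventually (\<lambda>T. l (J T) \<le> R T / real T) sequentially"
      unfolding eventually_sequentially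
    proof (intro exI[of _ 1] allI impI)
      fix T :: nat assume T: "1 \<le> T"
      define q where "q = floor_sqrt T"
      have q0: "q > 0" using T unfolding q_def by simp
      have sq: "Suc (J T) = q" unfolding J_def q_def using q0 q_def by simp
      have q1: "q^2 \<le> T" unfolding q_def by simp
      have q2: "T < (Suc q)^2" unfolding q_def by (rule Suc_floor_sqrt_power2_gt)
      have "l (J T) = R (q^2) / (real q + 1)^2"
        unfolding l_def a_def using q0 sq[symmetric]
        by (simp add: field_simps) 
      also have "\<dots> \<le> R T / (real q + 1)^2"
        by (intro divide_right_mono mono q1) auto
      also have "\<dots> \<le> R T / real T"
      proof (rule divide_left_mono[OF _ nn])
        have "real T < real ((Suc q)^2)" using q2 by linarith
        then show "real T \<le> (real q + 1)^2" by (simp add: add.commute)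
        show "0 < (real q + 1)^2 * real T" using T by simp
      qed
      finally show "l (J T) \<le> R T / real T" .
    qed
    show "eventually (\<lambda>T. R T / real T \<le> u (J T)) sequentially"
      unfolding eventually_sequentially
    proof (intro exI[of _ 1] allI impI)
      fix T :: nat assume T: "1 \<le> T"
      define q where "q = floor_sqrt T"
      have q0: "q > 0" using T unfolding q_def by simp
      have sq: "Suc (J T) = q" unfolding J_def q_def using q0 q_def by simp
      have q1: "q^2 \<le> T" unfolding q_def by simp
      have q2: "T < (Suc q)^2" unfolding q_def by (rule Suc_floor_sqrt_power2_gt)
      have "R T / real T \<le> R ((Suc q)^2) / real T"
        by (intro divide_right_mono mono) (use q2 in auto)
      also have "\<dots> \<le> R ((Suc q)^2) / (real q)^2"
      proof (rule divide_left_mono[OF _ nn])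
        have "real (q^2) \<le> real T" using q1 by linarith
        then show "(real q)^2 \<le> real T" by simp
        show "0 < real T * (real q)^2" using T q0 by simp
      qed
      also have "\<dots> = u (J T)"
        unfolding u_def a_def using q0 sq[symmetric]
        by (simp add: field_simps)
      finally show "R T / real T \<le> u (J T)" .
    qed
  qed
qed

lemma sum_lessThan_add_split: "(\<Sum>t<a+(b::nat). g t) = (\<Sum>t<a. g t) + (\<Sum>t<b. (g (a+t)::real))"
  by (induction b) (simp_all add: add.assoc)

lemma sum_mod_periods: "(\<Sum>t<q*K. f (t mod K)) = real q * (\<Sum>j<K. (f j :: real))"
proof (induction q)
  case 0 then show ?case by simp
next
  case (Suc q)
  have "(\<Sum>t<Suc q*K. f (t mod K)) = (\<Sum>t<q*K + K. f (t mod K))" by (simp add: add.commute)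
  also have "\<dots> = (\<Sum>t<q*K. f (t mod K)) + (\<Sum>t<K. f ((q*K + t) mod K))"
    by (rule sum_lessThan_add_split)
  also have "(\<Sum>t<K. f ((q*K + t) mod K)) = (\<Sum>t<K. f t)"
    by (intro sum.cong) auto
  finally show ?case using Suc by (simp add: algebra_simps)
qed

lemma periodic_avg:
  fixes f :: "nat \<Rightarrow> real"
  assumes K: "K > 0"
  shows "(\<lambda>T. (\<Sum>t<T. f (t mod K)) / real T) \<longlonglongrightarrow> (\<Sum>j<K. f j) / real K"
proof -
  define F where "F = (\<Sum>j<K. f j)"
  define B where "B = (\<Sum>j<K. \<bar>f j\<bar>)"
  have key: "\<bar>(\<Sum>t<T. f (t mod K)) / real T - F / real K\<bar> \<le> (\<bar>F\<bar> + B) / real T" if T: "T > 0" for T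
  proof -
    define q where "q = T div K"
    define r where "r = T mod K"
    have Tqr: "T = q*K + r" unfolding q_def r_def by simp
    have rK: "r < K" unfolding r_def using K by simp
    have "(\<Sum>t<T. f (t mod K)) = (\<Sum>t<q*K. f (t mod K)) + (\<Sum>t<r. f ((q*K+t) mod K))"
      unfolding Tqr by (rule sum_lessThan_add_split)
    also have "(\<Sum>t<r. f ((q*K+t) mod K)) = (\<Sum>t<r. f t)"
      using rK by (intro sum.cong) auto
    finally have S: "(\<Sum>t<T. f (t mod K)) = real q * F + (\<Sum>t<r. f t)"
      unfolding F_def sum_mod_periods by simp
    have rb: "\<bar>\<Sum>t<r. f t\<bar> \<le> B"
    proof -
      have "\<bar>\<Sum>t<r. f t\<bar> \<le> (\<Sum>t<r. \<bar>f t\<bar>)" by (rule sum_abs)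
      also have "\<dots> \<le> B" unfolding B_def using rK by (intro sum_mono2) auto
      finally show ?thesis .
    qed
    have rT: "real T = real q * real K + real r" using Tqr by simp
    have "(\<Sum>t<T. f (t mod K)) / real T - F / real K
          = ((\<Sum>t<r. f t) - real r * F / real K) / real T"
      unfolding S using T K rT by (simp add: field_simps)
    also have "\<bar>\<dots>\<bar> \<le> (\<bar>F\<bar> + B) / real T"
    proof -
      have "\<bar>real r * F / real K\<bar> \<le> \<bar>F\<bar>"
        using rK K by (simp add: abs_mult divide_le_eq_1 mult_le_cancel_right2 field_simps mult_left_mono)
      then have "\<bar>(\<Sum>t<r. f t) - real r * F / real K\<bar> \<le> \<bar>F\<bar> + B" using rb by linarith
      then show ?thesis using T by (simp add: abs_div divide_right_mono)
    qed
    finally show ?thesis .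
  qed
  have "(\<lambda>T. (\<Sum>t<T. f (t mod K)) / real T - F / real K) \<longlonglongrightarrow> 0"
  proof (rule Lim_null_comparison)
    show "eventually (\<lambda>T. norm ((\<Sum>t<T. f (t mod K)) / real T - F / real K) \<le> (\<bar>F\<bar> + B) / real T) sequentially"
      unfolding eventually_sequentially using key by (intro exI[of _ 1]) auto
    show "(\<lambda>T. (\<bar>F\<bar> + B) / real T) \<longlonglongrightarrow> 0" by real_asymp
  qed
  then show ?thesis unfolding F_def by (simp add: LIM_zero_iff)
qed

lemma (in prob_space) slln_core:
  fixes X :: "nat \<Rightarrow> 'a \<Rightarrow> real"
  assumes meas[measurable]: "\<And>t. X t \<in> borel_measurable M"
    and nn: "\<And>t \<omega>. \<omega> \<in> space M \<Longrightarrow> 0 \<le> X t \<omega>"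
    and int: "\<And>t. integrable M (X t)"
    and int2: "\<And>t. integrable M (\<lambda>\<omega>. (X t \<omega>)^2)"
    and bnd: "\<And>t. expectation (\<lambda>\<omega>. (X t \<omega>)^2) \<le> C"
    and unc_int: "\<And>t t'. t \<noteq> t' \<Longrightarrow> integrable M (\<lambda>\<omega>. X t \<omega> * X t' \<omega>)"
    and unc: "\<And>t t'. t \<noteq> t' \<Longrightarrow> expectation (\<lambda>\<omega>. X t \<omega> * X t' \<omega>) = expectation (X t) * expectation (X t')"
    and avg: "(\<lambda>T. (\<Sum>t<T. expectation (X t)) / real T) \<longlonglongrightarrow> \<mu>"
  shows "AE \<omega> in M. (\<lambda>T. (\<Sum>t<T. X t \<omega>) / real T) \<longlonglongrightarrow> \<mu>"
proof -
  define m where "m t = expectation (X t)" for t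
  define Y where "Y t \<omega> = X t \<omega> - m t" for t \<omega>
  have Yint: "integrable M (\<lambda>\<omega>. Y t \<omega> * Y t' \<omega>)" for t t'
  proof (cases "t = t'")
    case True
    have "(\<lambda>\<omega>. Y t \<omega> * Y t' \<omega>) = (\<lambda>\<omega>. (X t \<omega>)^2 - 2 * m t * X t \<omega> + (m t)^2)"
      using True by (auto simp: Y_def power2_eq_square algebra_simps)
    then show ?thesis using int2 int by simp
  next
    case False
    have "(\<lambda>\<omega>. Y t \<omega> * Y t' \<omega>) = (\<lambda>\<omega>. X t \<omega> * X t' \<omega> - m t' * X t \<omega> - m t * X t' \<omega> + m t * m t')"
      by (auto simp: Y_def algebra_simps)
    then show ?thesis using unc_int[OF False] int by simp
  qed
  have Yexp: "expectation (\<lambda>\<omega>. Y t \<omega> * Y t' \<omega>) \<le> (if t = t' then C else 0)" for t t'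
  proof (cases "t = t'")
    case True
    have "(\<lambda>\<omega>. Y t \<omega> * Y t' \<omega>) = (\<lambda>\<omega>. (X t \<omega>)^2 - 2 * m t * X t \<omega> + (m t)^2)"
      using True by (auto simp: Y_def power2_eq_square algebra_simps)
    then have "expectation (\<lambda>\<omega>. Y t \<omega> * Y t' \<omega>) = expectation (\<lambda>\<omega>. (X t \<omega>)^2) - 2 * m t * m t + (m t)^2"
      using int2 int by (simp add: m_def prob_space)
    also have "\<dots> \<le> C" using bnd[of t] zero_le_square[of "m t"] by (simp add: power2_eq_square del: zero_le_square)
    finally show ?thesis using True by simp
  next
    case False
    have "(\<lambda>\<omega>. Y t \<omega> * Y t' \<omega>) = (\<lambda>\<omega>. X t \<omega> * X t' \<omega> - m t' * X t \<omega> - m t * X t' \<omega> + m t * m t')"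
      by (auto simp: Y_def algebra_simps)
    then have "expectation (\<lambda>\<omega>. Y t \<omega> * Y t' \<omega>) = m t * m t' - m t' * m t - m t * m t' + m t * m t'"
      using unc_int[OF False] int unc[OF False] by (simp add: m_def prob_space)
    then show ?thesis using False by simp
  qed
  define Z where "Z T \<omega> = (\<Sum>t<T. Y t \<omega>)" for T \<omega>
  have Z2: "(Z T \<omega>)^2 = (\<Sum>t<T. \<Sum>t'<T. Y t \<omega> * Y t' \<omega>)" for T \<omega>
    by (simp add: Z_def power2_eq_square sum_product)
  have Z2int: "integrable M (\<lambda>\<omega>. (Z T \<omega>)^2)" for T
    unfolding Z2 using Yint by auto
  have Z2exp: "expectation (\<lambda>\<omega>. (Z T \<omega>)^2) \<le> C * real T" for T
  proof -
    have "expectation (\<lambda>\<omega>. (Z T \<omega>)^2) = (\<Sum>t<T. \<Sum>t'<T. expectation (\<lambda>\<omega>. Y t \<omega> * Y t' \<omega>))"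
      unfolding Z2 using Yint by (simp add: Bochner_Integration.integral_sum)
    also have "\<dots> \<le> (\<Sum>t<T. \<Sum>t'<T. (if t = t' then C else 0))"
      by (intro sum_mono Yexp)
    also have "\<dots> = C * real T" by simp
    finally show ?thesis .
  qed
  have Zmeas[measurable]: "(\<lambda>\<omega>. Z T \<omega>) \<in> borel_measurable M" for T
    unfolding Z_def Y_def by measurable
  have BC: "AE \<omega> in M. eventually (\<lambda>j. \<omega> \<in> space M - {\<omega> \<in> space M. real ((Suc j)^2)^2 / (real r + 1)^2 \<le> (Z ((Suc j)^2) \<omega>)^2}) sequentially"
    for r :: nat
  proof (rule borel_cantelli_AE1)
    define A where "A j = {\<omega> \<in> space M. real ((Suc j)^2)^2 / (real r + 1)^2 \<le> (Z ((Suc j)^2) \<omega>)^2}" for j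
    show "\<And>j. A j \<in> sets M" unfolding A_def by measurable
    show "\<And>j. emeasure M (A j) < \<infinity>" by (simp add: less_top[symmetric])
    have mb: "measure M (A j) \<le> C * (real r + 1)^2 * inverse (real (Suc j) ^ 2)" for j
    proof -
      have gen: "\<And>q s. q > 0 \<Longrightarrow> s > 0 \<Longrightarrow> C * q / (q^2 / s) = C * s * inverse q"
        by (simp add: field_simps power2_eq_square)
      define c where "c = real ((Suc j)^2)^2 / (real r + 1)^2"
      have c0: "c > 0" unfolding c_def by simp
      have "measure M (A j) \<le> expectation (\<lambda>\<omega>. (Z ((Suc j)^2) \<omega>)^2) / c"
        unfolding A_def c_def[symmetric]
        by (rule integral_Markov_inequality_measure[OF Z2int, where A="space M"]) (auto simp: c0)
      also have "\<dots> \<le> C * real ((Suc j)^2) / c"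
        by (intro divide_right_mono) (use Z2exp[of "(Suc j)^2"] c0 in auto)
      also have "\<dots> = C * (real r + 1)^2 * inverse (real ((Suc j)^2))"
        unfolding c_def by (rule gen) auto
      also have "\<dots> = C * (real r + 1)^2 * inverse (real (Suc j) ^ 2)"
        by (simp only: of_nat_power)
      finally show ?thesis .
    qed
    have s1: "summable (\<lambda>j. inverse (real (Suc j) ^ 2))"
      using summable_Suc_iff[THEN iffD2, OF inverse_power_summable[of 2, where 'a=real]] by simp
    show "summable (\<lambda>j. measure M (A j))"
      by (rule summable_comparison_test[OF _ summable_mult[OF s1, of "C * (real r + 1)^2"]])
         (use mb in auto)
  qed
  then have "AE \<omega> in M. \<forall>r::nat. eventually (\<lambda>j. \<omega> \<in> space M - {\<omega> \<in> space M. real ((Suc j)^2)^2 / (real r + 1)^2 \<le> (Z ((Suc j)^2) \<omega>)^2}) sequentially"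
    by (simp add: AE_all_countable)
  then show ?thesis
  proof (rule AE_mp, intro AE_I2 impI)
    fix \<omega> assume \<omega>: "\<omega> \<in> space M"
    assume H: "\<forall>r::nat. eventually (\<lambda>j. \<omega> \<in> space M - {\<omega> \<in> space M. real ((Suc j)^2)^2 / (real r + 1)^2 \<le> (Z ((Suc j)^2) \<omega>)^2}) sequentially"
    have Z0: "(\<lambda>j. Z ((Suc j)^2) \<omega> / real ((Suc j)^2)) \<longlonglongrightarrow> 0"
      unfolding tendsto_iff
    proof (intro allI impI)
      fix e :: real assume e: "e > 0"
      obtain r :: nat where r: "inverse (real (Suc r)) < e" using reals_Archimedean[OF e] by blast
      show "eventually (\<lambda>j. dist (Z ((Suc j)^2) \<omega> / real ((Suc j)^2)) 0 < e) sequentially"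
        using H[rule_format, of r]
      proof eventually_elim
        case (elim j)
        define q where "q = real ((Suc j)^2)"
        have q0: "q > 0" unfolding q_def by simp
        have "(Z ((Suc j)^2) \<omega>)^2 < (q / (real r + 1))^2"
          using elim \<omega> unfolding q_def by (simp add: power_divide)
        then have "\<bar>Z ((Suc j)^2) \<omega>\<bar>^2 < (q / (real r + 1))^2" by (simp only: power2_abs)
        then have "\<bar>Z ((Suc j)^2) \<omega>\<bar> < q / (real r + 1)"
          by (rule power_less_imp_less_base) (use q0 in simp)
        then have "\<bar>Z ((Suc j)^2) \<omega>\<bar> / q < 1 / (real r + 1)"
          using q0 by (simp add: field_simps)
        also have "\<dots> < e" using r by (simp add: inverse_eq_divide add.commute)
        finally show ?case using q0 unfolding q_def by (simp add: abs_div)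
      qed
    qed
    define R where "R T = (\<Sum>t<T. X t \<omega>)" for T
    have RZ: "R T / real T = Z T \<omega> / real T + (\<Sum>t<T. m t) / real T" for T
      unfolding R_def Z_def Y_def by (simp add: sum_subtractf add_divide_distrib[symmetric])
    have sm: "strict_mono (\<lambda>j::nat. (Suc j)^2)"
      by (rule strict_monoI) (simp add: power_strict_mono)
    have avg2: "(\<lambda>j. (\<Sum>t<(Suc j)^2. m t) / real ((Suc j)^2)) \<longlonglongrightarrow> \<mu>"
      using filterlim_compose[OF avg filterlim_subseq[OF sm]] unfolding m_def by simp
    have "(\<lambda>j. R ((Suc j)^2) / real ((Suc j)^2)) \<longlonglongrightarrow> 0 + \<mu>"
      unfolding RZ by (intro tendsto_add Z0 avg2)
    then have lim: "(\<lambda>j. R ((Suc j)^2) / real ((Suc j)^2)) \<longlonglongrightarrow> \<mu>" by simp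
    have "(\<lambda>T. R T / real T) \<longlonglongrightarrow> \<mu>"
    proof (rule sq_sandwich[OF _ _ lim])
      show "R a \<le> R b" if "a \<le> b" for a b
        unfolding R_def using that nn[OF \<omega>] by (intro sum_mono2) auto
      show "0 \<le> R a" for a unfolding R_def using nn[OF \<omega>] by (intro sum_nonneg) auto
    qed
    then show "(\<lambda>T. (\<Sum>t<T. X t \<omega>) / real T) \<longlonglongrightarrow> \<mu>" unfolding R_def .
  qed
qed

lemma sq_bound_aux:
  fixes gv hv cv x :: real
  assumes "0 \<le> gv" "gv \<le> \<bar>x\<bar> + 1" "0 \<le> hv" "hv \<le> 1" "0 \<le> cv"
  shows "(cv * (gv * hv))^2 \<le> cv^2 * (2 * x^2 + 2)"
proof -
  have "(gv * hv)^2 \<le> gv^2"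
    using assms by (simp add: power_mult_distrib mult_left_le power_le_one)
  also have "\<dots> \<le> (\<bar>x\<bar> + 1)^2" using assms by (intro power_mono) auto
  also have "\<dots> \<le> 2 * x^2 + 2"
  proof -
    have "0 \<le> (\<bar>x\<bar> - 1)^2" by simp
    then show ?thesis by (simp add: power2_eq_square algebra_simps abs_mult_self_eq)
  qed
  finally have "(gv * hv)^2 \<le> 2 * x^2 + 2" .
  then show ?thesis by (simp add: power_mult_distrib mult_left_mono)
qed

lemma (in prob_space) slln_app:
  fixes S :: "nat \<Rightarrow> 'a \<Rightarrow> real" and D :: "nat \<Rightarrow> 'a \<Rightarrow> bool" and P :: "nat list"
    and g :: "real \<Rightarrow> real" and c :: "nat \<Rightarrow> real" and a b :: real and p :: "nat \<Rightarrow> real"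
  assumes K: "length P > 0"
    and Smeas: "\<And>t. S t \<in> borel_measurable M"
    and Dmeas: "\<And>t. D t \<in> measurable M (count_space UNIV)"
    and ind: "indep_vars (\<lambda>_. borel) (\<lambda>i \<omega>. case i of Inl t \<Rightarrow> S t \<omega> | Inr t \<Rightarrow> of_bool (D t \<omega>)) UNIV"
    and dist: "\<forall>t t'. P ! (t mod length P) = P ! (t' mod length P) \<longrightarrow> distr M borel (S t) = distr M borel (S t')"
    and Sint: "\<And>t. integrable M (S t)"
    and Sint2: "\<And>t. integrable M (\<lambda>\<omega>. (S t \<omega>)^2)"
    and pD: "\<And>t. prob {\<omega>\<in>space M. \<not> D t \<omega>} = p (P ! (t mod length P))"
    and gm: "g \<in> borel_measurable borel"
    and g0: "\<And>x. 0 \<le> g x" and g1: "\<And>x. g x \<le> \<bar>x\<bar> + 1"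
    and c0: "\<And>j. 0 \<le> c j"
    and ab: "0 \<le> a" "a \<le> 1" "0 \<le> b" "b \<le> 1"
  shows "AE \<omega> in M. (\<lambda>T. (\<Sum>t<T. c (t mod length P) * (g (S t \<omega>) * (if D t \<omega> then a else b))) / real T)
     \<longlonglongrightarrow> (\<Sum>j<length P. c j * (expectation (\<lambda>\<omega>. g (S j \<omega>)) * (a * (1 - p (P!j)) + b * p (P!j)))) / real (length P)"
proof -
  define K where "K = length P"
  note Dp[measurable] = Dmeas
  note [measurable] = Smeas gm
  define W where "W i \<omega> = (case i of Inl t \<Rightarrow> g (S t \<omega>) | Inr t \<Rightarrow> (if D t \<omega> then a else b))" for i \<omega>
  define Yf where "Yf i = (case i of Inl (t::nat) \<Rightarrow> g | Inr (t::nat) \<Rightarrow> (\<lambda>y::real. if y = 1 then a else b))" for i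
  have indW: "indep_vars (\<lambda>_. borel) W UNIV"
  proof -
    have "indep_vars (\<lambda>_. borel) (\<lambda>i \<omega>. Yf i (case i of Inl t \<Rightarrow> S t \<omega> | Inr t \<Rightarrow> of_bool (D t \<omega>))) UNIV"
    proof (rule indep_vars_compose2[OF ind])
      fix i :: "nat + nat"
      show "Yf i \<in> borel_measurable borel"
        by (cases i) (auto simp: Yf_def)
    qed
    then show ?thesis
      by (rule indep_vars_cong[THEN iffD1, rotated 3]) (auto simp: W_def Yf_def split: sum.splits)
  qed
  have W1: "W (Inl t) = (\<lambda>\<omega>. g (S t \<omega>))" for t by (simp add: W_def fun_eq_iff)
  have W2: "W (Inr t) = (\<lambda>\<omega>. if D t \<omega> then a else b)" for t by (simp add: W_def fun_eq_iff)
  have Wmeas[measurable]: "W i \<in> borel_measurable M" for i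
  proof (cases i)
    case (Inl t) show ?thesis unfolding Inl W1 by measurable
  next
    case (Inr t) show ?thesis unfolding Inr W2 by measurable
  qed
  have gint: "integrable M (\<lambda>\<omega>. g (S t \<omega>))" for t
  proof (rule Bochner_Integration.integrable_bound[of _ "\<lambda>\<omega>. \<bar>S t \<omega>\<bar> + 1"])
    show "integrable M (\<lambda>\<omega>. \<bar>S t \<omega>\<bar> + 1)" using Sint by auto
    show "AE \<omega> in M. norm (g (S t \<omega>)) \<le> norm (\<bar>S t \<omega>\<bar> + 1)" using g0 g1 by auto
  qed auto
  have hint: "integrable M (\<lambda>\<omega>. if D t \<omega> then a else b)" for t
    by (rule integrable_const_bound[where B=1]) (use ab in auto)
  have Wint: "integrable M (W i)" for i
    by (cases i) (auto simp: W1 W2 gint hint)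
  have Eg: "expectation (\<lambda>\<omega>. \<phi> (S t \<omega>)) = expectation (\<lambda>\<omega>. \<phi> (S (t mod K) \<omega>))"
    if [measurable]: "\<phi> \<in> borel_measurable borel" for \<phi> :: "real \<Rightarrow> real" and t
  proof -
    have d: "distr M borel (S t) = distr M borel (S (t mod K))"
      using dist[rule_format, of t "t mod K"] unfolding K_def by simp
    have "expectation (\<lambda>\<omega>. \<phi> (S t \<omega>)) = integral\<^sup>L (distr M borel (S t)) \<phi>"
      by (rule integral_distr[where g="S t" and f=\<phi> and N=borel, symmetric]) (simp_all add: Smeas that)
    also have "\<dots> = integral\<^sup>L (distr M borel (S (t mod K))) \<phi>" by (simp only: d)
    also have "\<dots> = expectation (\<lambda>\<omega>. \<phi> (S (t mod K) \<omega>))" by (rule integral_distr[where g="S (t mod K)" and f=\<phi> and N=borel]) (simp_all add: Smeas that)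
    finally show ?thesis .
  qed
  have Eh: "expectation (\<lambda>\<omega>. if D t \<omega> then a else b) = a * (1 - p (P ! (t mod K))) + b * p (P ! (t mod K))" for t
  proof -
    define E1 where "E1 = {\<omega>\<in>space M. D t \<omega>}"
    define E2 where "E2 = {\<omega>\<in>space M. \<not> D t \<omega>}"
    have [measurable]: "E1 \<in> sets M" "E2 \<in> sets M" unfolding E1_def E2_def by measurable
    have "expectation (\<lambda>\<omega>. if D t \<omega> then a else b) = expectation (\<lambda>\<omega>. a * indicator E1 \<omega> + b * indicator E2 \<omega>)"
      by (intro Bochner_Integration.integral_cong) (auto simp: E1_def E2_def indicator_def)
    also have "\<dots> = a * prob E1 + b * prob E2"
    proof -
      have i1: "integrable M (indicator E1 :: 'a \<Rightarrow> real)" "integrable M (indicator E2 :: 'a \<Rightarrow> real)"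
        by (auto intro!: integrable_real_indicator simp: less_top[symmetric])
      show ?thesis using i1 by (simp add: Bochner_Integration.integral_add)
    qed
    also have "E1 = space M - E2" unfolding E1_def E2_def by auto
    also have "prob (space M - E2) = 1 - prob E2" by (rule prob_compl) simp
    finally show ?thesis using pD[of t] unfolding E2_def K_def by simp
  qed
  have pairE: "expectation (\<lambda>\<omega>. W (Inl t) \<omega> * W (Inr t) \<omega>) = expectation (W (Inl t)) * expectation (W (Inr t))" for t
    using indep_vars_lebesgue_integral[OF _ indep_vars_subset[OF indW] Wint, of "{Inl t, Inr t}"] by simp
  define X where "X t \<omega> = c (t mod K) * (g (S t \<omega>) * (if D t \<omega> then a else b))" for t \<omega>
  have XW: "X t \<omega> = c (t mod K) * (\<Prod>i\<in>{Inl t, Inr t}. W i \<omega>)" for t \<omega>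
    by (simp add: X_def W_def)
  have Xmeas[measurable]: "X t \<in> borel_measurable M" for t unfolding X_def by measurable
  have EX: "expectation (X t) = c (t mod K) * (expectation (\<lambda>\<omega>. g (S (t mod K) \<omega>)) * (a * (1 - p (P ! (t mod K))) + b * p (P ! (t mod K))))" for t
  proof -
    have "expectation (X t) = c (t mod K) * expectation (\<lambda>\<omega>. \<Prod>i\<in>{Inl t, Inr t}. W i \<omega>)"
      unfolding XW by simp
    also have "expectation (\<lambda>\<omega>. \<Prod>i\<in>{Inl t, Inr t}. W i \<omega>) = (\<Prod>i\<in>{Inl t, Inr t}. expectation (W i))"
      by (rule indep_vars_lebesgue_integral) (auto intro: indep_vars_subset[OF indW] Wint)
    also have "\<dots> = expectation (\<lambda>\<omega>. g (S t \<omega>)) * expectation (\<lambda>\<omega>. if D t \<omega> then a else b)"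
      by (simp add: W1 W2)
    finally show ?thesis using Eg[OF gm, of t] Eh[of t] by simp
  qed
  have Xint: "integrable M (X t)" for t
    unfolding XW by (intro integrable_mult_right indep_vars_integrable) (auto intro: indep_vars_subset[OF indW] Wint)
  have Xint2: "integrable M (\<lambda>\<omega>. (X t \<omega>)^2)" for t
  proof (rule Bochner_Integration.integrable_bound[of _ "\<lambda>\<omega>. (c (t mod K))^2 * (2 * (S t \<omega>)^2 + 2)"])
    show "integrable M (\<lambda>\<omega>. (c (t mod K))^2 * (2 * (S t \<omega>)^2 + 2))" using Sint2 by auto
    show "AE \<omega> in M. norm ((X t \<omega>)^2) \<le> norm ((c (t mod K))^2 * (2 * (S t \<omega>)^2 + 2))"
      using sq_bound_aux g0 g1 c0 ab unfolding X_def by (auto simp: abs_mult)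
  qed auto
  have g2int: "integrable M (\<lambda>\<omega>. (g (S t \<omega>))^2)" for t
  proof (rule Bochner_Integration.integrable_bound[of _ "\<lambda>\<omega>. (2 * (S t \<omega>)^2 + 2)"])
    show "integrable M (\<lambda>\<omega>. (2 * (S t \<omega>)^2 + 2))" using Sint2 by auto
    show "AE \<omega> in M. norm ((g (S t \<omega>))^2) \<le> norm (2 * (S t \<omega>)^2 + 2)"
      using sq_bound_aux[of "g (S _ _)" _ 1 1] g0 g1 by (auto simp: abs_mult)
  qed auto
  define C where "C = (\<Sum>j<K. (c j)^2 * expectation (\<lambda>\<omega>. (g (S j \<omega>))^2))"
  have bnd: "expectation (\<lambda>\<omega>. (X t \<omega>)^2) \<le> C" for t
  proof -
    have "expectation (\<lambda>\<omega>. (X t \<omega>)^2) \<le> expectation (\<lambda>\<omega>. (c (t mod K))^2 * (g (S t \<omega>))^2)"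
    proof (rule integral_mono[OF Xint2])
      show "integrable M (\<lambda>\<omega>. (c (t mod K))^2 * (g (S t \<omega>))^2)" using g2int by auto
      fix \<omega>
      have "(if D t \<omega> then a else b)^2 \<le> 1" using ab by (auto simp: power_le_one)
      then have "(g (S t \<omega>) * (if D t \<omega> then a else b))^2 \<le> (g (S t \<omega>))^2"
        by (simp add: power_mult_distrib mult_left_le)
      then show "(X t \<omega>)^2 \<le> (c (t mod K))^2 * (g (S t \<omega>))^2"
        unfolding X_def by (simp add: power_mult_distrib[of "c _"] mult_left_mono)
    qed
    also have "\<dots> = (c (t mod K))^2 * expectation (\<lambda>\<omega>. (g (S (t mod K) \<omega>))^2)"
      using Eg[of "\<lambda>x. (g x)^2" t] by simp
    also have "\<dots> \<le> C" unfolding C_def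
      using K unfolding K_def[symmetric]
      by (intro member_le_sum[of "t mod K" "{..<K}" "\<lambda>j. (c j)^2 * expectation (\<lambda>\<omega>. (g (S j \<omega>))^2)"]) (auto intro!: mult_nonneg_nonneg integral_nonneg_AE)
    finally show ?thesis .
  qed
  have unc_int: "integrable M (\<lambda>\<omega>. X t \<omega> * X t' \<omega>)" and
       unc: "expectation (\<lambda>\<omega>. X t \<omega> * X t' \<omega>) = expectation (X t) * expectation (X t')"
    if tt: "t \<noteq> t'" for t t'
  proof -
    define I where "I = {Inl t, Inr t, Inl t', Inr t'}"
    have XX: "X t \<omega> * X t' \<omega> = (c (t mod K) * c (t' mod K)) * (\<Prod>i\<in>I. W i \<omega>)" for \<omega>
      unfolding XW I_def using tt by (simp add: ac_simps)
    have iI: "indep_vars (\<lambda>_. borel) W I" by (rule indep_vars_subset[OF indW]) auto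
    have fI: "finite I" unfolding I_def by simp
    show "integrable M (\<lambda>\<omega>. X t \<omega> * X t' \<omega>)"
      unfolding XX by (intro integrable_mult_right indep_vars_integrable[OF fI iI Wint])
    have "expectation (\<lambda>\<omega>. X t \<omega> * X t' \<omega>) = (c (t mod K) * c (t' mod K)) * (\<Prod>i\<in>I. expectation (W i))"
      unfolding XX by (simp add: indep_vars_lebesgue_integral[OF fI iI Wint])
    also have "\<dots> = (c (t mod K) * (\<Prod>i\<in>{Inl t, Inr t}. expectation (W i))) * (c (t' mod K) * (\<Prod>i\<in>{Inl t', Inr t'}. expectation (W i)))"
      unfolding I_def using tt by (simp add: ac_simps)
    also have "\<dots> = expectation (X t) * expectation (X t')"
      unfolding XW by (simp add: pairE)
    finally show "expectation (\<lambda>\<omega>. X t \<omega> * X t' \<omega>) = expectation (X t) * expectation (X t')" .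
  qed
  define f where "f j = c j * (expectation (\<lambda>\<omega>. g (S j \<omega>)) * (a * (1 - p (P!j)) + b * p (P!j)))" for j
  have avg: "(\<lambda>T. (\<Sum>t<T. expectation (X t)) / real T) \<longlonglongrightarrow> (\<Sum>j<K. f j) / real K"
    unfolding EX f_def[symmetric] using periodic_avg K unfolding K_def by blast
  have "AE \<omega> in M. (\<lambda>T. (\<Sum>t<T. X t \<omega>) / real T) \<longlonglongrightarrow> (\<Sum>j<K. f j) / real K"
  proof (rule slln_core[OF Xmeas _ Xint Xint2 bnd unc_int unc avg])
    show "0 \<le> X t \<omega>" for t \<omega> unfolding X_def using c0 g0 ab by auto
  qed auto
  then show ?thesis unfolding X_def f_def K_def .
qed

lemma sum_lessThan_diff_ivl:
  "a \<le> (b::nat) \<Longrightarrow> (\<Sum>t<b. f t) - (\<Sum>t<a. f t) = (\<Sum>t\<in>{a..<b}. (f t :: real))"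
  using sum.atLeastLessThan_concat[of 0 a b f] by (simp add: lessThan_atLeast0)

lemma sum_ivl_first:
  "a < (b::nat) \<Longrightarrow> (\<Sum>t\<in>{a..<b}. f t) = f a + (\<Sum>t\<in>{a<..<b}. (f t :: real))"
  by (simp add: sum.atLeast_Suc_lessThan atLeastSucLessThan_greaterThanLessThan)

lemma renewal:
  fixes Sv :: "nat \<Rightarrow> real" and Ev :: "nat set"
  assumes hA: "(\<lambda>T. (\<Sum>t<T. Sv t) / real T) \<longlonglongrightarrow> \<sigma>"
    and hC: "(\<lambda>T. (\<Sum>t<T. of_bool (t \<in> Ev)) / real T) \<longlonglongrightarrow> \<gamma>"
    and g0: "\<gamma> > 0"
    and hB: "(\<lambda>T. (\<Sum>t<T. of_bool (t \<in> Ev) * Sv t) / real T) \<longlonglongrightarrow> \<beta>"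
  shows "(\<lambda>K'. (\<Sum>k=1..K'. \<Sum>t\<in>{enumerate Ev (k - 1)<..<enumerate Ev k}. Sv t) / real K')
           \<longlonglongrightarrow> \<sigma> / \<gamma> - \<beta> / \<gamma>"
proof -
  have cnt: "(\<Sum>t<T. (of_bool (t \<in> Ev) :: real)) = real (card ({..<T} \<inter> Ev))" for T
    by (simp add: Int_def)
  have inf: "infinite Ev"
  proof
    assume fin: "finite Ev"
    have "(\<lambda>T. (\<Sum>t<T. (of_bool (t \<in> Ev) :: real)) / real T) \<longlonglongrightarrow> 0"
    proof (rule Lim_null_comparison)
      show "eventually (\<lambda>T. norm ((\<Sum>t<T. (of_bool (t \<in> Ev) :: real)) / real T) \<le> real (card Ev) / real T) sequentially"
      proof (intro always_eventually allI)
        fix T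
        have "card ({..<T} \<inter> Ev) \<le> card Ev" using fin by (intro card_mono) auto
        then show "norm ((\<Sum>t<T. (of_bool (t \<in> Ev) :: real)) / real T) \<le> real (card Ev) / real T"
          unfolding cnt by (simp add: divide_right_mono)
      qed
      show "(\<lambda>T. real (card Ev) / real T) \<longlonglongrightarrow> 0" by real_asymp
    qed
    from LIMSEQ_unique[OF hC this] have "\<gamma> = 0" .
    with g0 show False by simp
  qed
  define e where "e k = enumerate Ev k" for k
  have sm: "strict_mono e" unfolding e_def using inf by (intro strict_monoI enumerate_mono)
  have eT: "filterlim e at_top at_top" using filterlim_subseq[OF sm] .
  have eE: "e k \<in> Ev" for k unfolding e_def using inf by (rule enumerate_in_set)
  have Ee: "t \<in> Ev \<Longrightarrow> \<exists>i. e i = t" for t unfolding e_def using inf by (rule enumerate_Ex)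
  have ek: "k \<le> e k" for k unfolding e_def using inf by (rule le_enumerate)
  have seg: "{..<e k} \<inter> Ev = e ` {..<k}" for k
  proof
    show "{..<e k} \<inter> Ev \<subseteq> e ` {..<k}"
    proof
      fix t assume t: "t \<in> {..<e k} \<inter> Ev"
      then obtain i where i: "e i = t" using Ee by blast
      then have "i < k" using t sm by (auto simp: strict_mono_less)
      then show "t \<in> e ` {..<k}" using i by auto
    qed
    show "e ` {..<k} \<subseteq> {..<e k} \<inter> Ev" using sm eE by (auto simp: strict_mono_less)
  qed
  have cntk: "(\<Sum>t<e k. (of_bool (t \<in> Ev) :: real)) = real k" for k
    unfolding cnt seg using strict_mono_imp_inj_on[OF sm] by (simp add: card_image)
  have c1: "(\<lambda>k. real k / real (e k)) \<longlonglongrightarrow> \<gamma>"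
    using filterlim_compose[OF hC eT] unfolding cntk .
  have c2: "(\<lambda>k. inverse (real k / real (e k))) \<longlonglongrightarrow> inverse \<gamma>"
    using tendsto_inverse[OF c1] g0 by simp
  have c3: "(\<lambda>k. real (e k) / real k) \<longlonglongrightarrow> 1 / \<gamma>"
  proof -
    have "eventually (\<lambda>k. inverse (real k / real (e k)) = real (e k) / real k) sequentially"
      by (simp add: inverse_eq_divide)
    from tendsto_cong[OF this] c2 show ?thesis by (simp add: inverse_eq_divide)
  qed
  define A where "A T = (\<Sum>t<T. Sv t)" for T
  define B where "B T = (\<Sum>t<T. of_bool (t \<in> Ev) * Sv t)" for T
  have limA: "(\<lambda>k. A (e k) / real k) \<longlonglongrightarrow> \<sigma> * (1 / \<gamma>)"
  proof -
    have l1: "(\<lambda>k. A (e k) / real (e k) * (real (e k) / real k)) \<longlonglongrightarrow> \<sigma> * (1 / \<gamma>)"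
      using tendsto_mult[OF filterlim_compose[OF hA eT] c3] unfolding A_def .
    have ev1: "eventually (\<lambda>k. A (e k) / real (e k) * (real (e k) / real k) = A (e k) / real k) sequentially"
      unfolding eventually_sequentially
    proof (intro exI[of _ 1] allI impI)
      fix k :: nat assume "1 \<le> k"
      then have "e k > 0" using ek[of k] by linarith
      then show "A (e k) / real (e k) * (real (e k) / real k) = A (e k) / real k" by simp
    qed
    show ?thesis by (rule tendsto_cong[OF ev1, THEN iffD1, OF l1])
  qed
  have limB: "(\<lambda>k. B (e k) / real k) \<longlonglongrightarrow> \<beta> * (1 / \<gamma>)"
  proof -
    have l1: "(\<lambda>k. B (e k) / real (e k) * (real (e k) / real k)) \<longlonglongrightarrow> \<beta> * (1 / \<gamma>)"
      using tendsto_mult[OF filterlim_compose[OF hB eT] c3] unfolding B_def .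
    have ev1: "eventually (\<lambda>k. B (e k) / real (e k) * (real (e k) / real k) = B (e k) / real k) sequentially"
      unfolding eventually_sequentially
    proof (intro exI[of _ 1] allI impI)
      fix k :: nat assume "1 \<le> k"
      then have "e k > 0" using ek[of k] by linarith
      then show "B (e k) / real (e k) * (real (e k) / real k) = B (e k) / real k" by simp
    qed
    show ?thesis by (rule tendsto_cong[OF ev1, THEN iffD1, OF l1])
  qed
  have gapE: "t \<notin> Ev" if "e k < t" "t < e (Suc k)" for k t
  proof
    assume "t \<in> Ev"
    then obtain i where i: "e i = t" using Ee by blast
    then have "k < i" "i < Suc k" using that sm by (auto simp: strict_mono_less)
    then show False by simp
  qed
  have ident: "(\<Sum>k=1..K'. \<Sum>t\<in>{e (k - 1)<..<e k}. Sv t) = (A (e K') - A (e 0)) - (B (e K') - B (e 0))" for K'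
  proof (induction K')
    case 0 then show ?case by simp
  next
    case (Suc K')
    have lt: "e K' < e (Suc K')" using sm by (simp add: strict_mono_less)
    have dA: "A (e (Suc K')) - A (e K') = Sv (e K') + (\<Sum>t\<in>{e K'<..<e (Suc K')}. Sv t)"
      unfolding A_def using lt by (simp add: sum_lessThan_diff_ivl sum_ivl_first)
    have "B (e (Suc K')) - B (e K') = of_bool (e K' \<in> Ev) * Sv (e K') + (\<Sum>t\<in>{e K'<..<e (Suc K')}. of_bool (t \<in> Ev) * Sv t)"
      unfolding B_def using lt by (simp only: sum_lessThan_diff_ivl[OF less_imp_le[OF lt]] sum_ivl_first[OF lt])
    also have "(\<Sum>t\<in>{e K'<..<e (Suc K')}. of_bool (t \<in> Ev) * Sv t) = 0"
      using gapE by (intro sum.neutral) auto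
    finally have dB: "B (e (Suc K')) - B (e K') = Sv (e K')" using eE by simp
    have "(\<Sum>k=1..Suc K'. \<Sum>t\<in>{e (k - 1)<..<e k}. Sv t) = (\<Sum>k=1..K'. \<Sum>t\<in>{e (k - 1)<..<e k}. Sv t) + (\<Sum>t\<in>{e K'<..<e (Suc K')}. Sv t)"
      by simp
    then show ?case using Suc dA dB by simp
  qed
  have final: "(\<lambda>K'. A (e K') / real K' - B (e K') / real K' - (A (e 0) - B (e 0)) / real K') \<longlonglongrightarrow> \<sigma> * (1 / \<gamma>) - \<beta> * (1 / \<gamma>) - 0"
    by (intro tendsto_diff limA limB) real_asymp
  have "(\<lambda>K'. A (e K') / real K' - B (e K') / real K' - (A (e 0) - B (e 0)) / real K') = (\<lambda>K'. (\<Sum>k=1..K'. \<Sum>t\<in>{e (k - 1)<..<e k}. Sv t) / real K')"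
    unfolding ident by (rule ext) (simp add: diff_divide_distrib; linarith)
  then show ?thesis using final unfolding e_def by simp
qed

lemma sum_ivl_first':
  "a < (b::nat) \<Longrightarrow> (\<Sum>t\<in>{a..<b}. f t) = f a + (\<Sum>t\<in>{a<..<b}. (f t :: real))"
  by (simp add: sum.atLeast_Suc_lessThan atLeastSucLessThan_greaterThanLessThan)

lemma interval_split3:
  fixes f :: "nat \<Rightarrow> real"
  assumes "a < b" "b < c"
  shows "(\<Sum>j\<in>{a<..<c}. f j) = (\<Sum>j\<in>{a<..<b}. f j) + f b + (\<Sum>j\<in>{b<..<c}. f j)"
proof -
  have "(\<Sum>j\<in>{Suc a..<c}. f j) = (\<Sum>j\<in>{Suc a..<b}. f j) + (\<Sum>j\<in>{b..<c}. f j)"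
    using sum.atLeastLessThan_concat[of "Suc a" b c f] assms by simp
  also have "(\<Sum>j\<in>{b..<c}. f j) = f b + (\<Sum>j\<in>{Suc b..<c}. f j)"
    using assms by (simp add: sum.atLeast_Suc_lessThan)
  finally show ?thesis by (simp add: atLeastSucLessThan_greaterThanLessThan)
qed

lemma positions_facts:
  "set (positions P n) = {j. j < length P \<and> P ! j = n}"
  "sorted_wrt (<) (positions P n)"
  "length (positions P n) = alpha P n"
proof -
  show "set (positions P n) = {j. j < length P \<and> P ! j = n}"
    unfolding positions_def by auto
  show "sorted_wrt (<) (positions P n)"
    unfolding positions_def by (simp add: sorted_wrt_filter)
  have "alpha P n = card {i. i < length P \<and> P ! i = n}"
    unfolding alpha_def by (rule length_filter_conv_card)
  also have "\<dots> = length (positions P n)"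
    unfolding positions_def length_filter_conv_card by (intro arg_cong[where f=card] Collect_cong) auto
  finally show "length (positions P n) = alpha P n" by simp
qed

lemma periodic_window:
  fixes f :: "nat \<Rightarrow> real"
  assumes K: "K > 0"
  shows "(\<Sum>j\<in>{a..<a+K}. f (j mod K)) = (\<Sum>j<K. f j)"
proof -
  have "(\<Sum>t<a+K. f (t mod K)) = (\<Sum>t<a. f (t mod K)) + (\<Sum>t<K. f ((a+t) mod K))"
    by (rule sum_lessThan_add_split)
  moreover have "(\<Sum>t<K+a. f (t mod K)) = (\<Sum>t<K. f (t mod K)) + (\<Sum>t<a. f ((K+t) mod K))"
    by (rule sum_lessThan_add_split)
  moreover have "(\<Sum>t<K. f (t mod K)) = (\<Sum>t<K. f t)" by (intro sum.cong) auto
  moreover have "(\<Sum>t<a. f ((K+t) mod K)) = (\<Sum>t<a. f (t mod K))" by simp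
  moreover have "(\<Sum>j\<in>{a..<a+K}. f (j mod K)) = (\<Sum>t<a+K. f (t mod K)) - (\<Sum>t<a. f (t mod K))"
    using sum.atLeastLessThan_concat[of 0 a "a+K" "\<lambda>t. f (t mod K)"] by (simp add: lessThan_atLeast0)
  ultimately show ?thesis by (simp add: add.commute)
qed

lemma sum_shift1: "(\<Sum>k=1..(L::nat). g (k - 1)) = (\<Sum>i<L. (g i :: real))"
  by (induction L) simp_all

lemma gap_sum:
  assumes a1: "alpha P n \<ge> 1"
  shows "(\<Sum>k=1..alpha P n. gap_mean P s n (k - 1)) = (\<Sum>j<length P. s (P ! j)) - real (alpha P n) * s n"
proof -
  define js where "js = positions P n"
  define K where "K = length P"
  define L where "L = alpha P n"
  have Ljs: "length js = L" unfolding js_def L_def by (rule positions_facts)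
  have sjs: "sorted_wrt (<) js" unfolding js_def by (rule positions_facts)
  have L1: "L \<ge> 1" using a1 unfolding L_def .
  have mem: "js ! k < K \<and> P ! (js ! k) = n" if "k < L" for k
  proof -
    have "js ! k \<in> set js" using that Ljs by simp
    then show ?thesis unfolding js_def positions_facts K_def by simp
  qed
  have K0: "K > 0" using mem[of 0] L1 by simp
  have lt: "js ! i < js ! j" if "i < j" "j < L" for i j
    using sorted_wrt_nth_less[OF sjs that(1)] that Ljs by simp
  define f where "f j = s (P ! (j mod K))" for j
  define nxt where "nxt k = (if Suc k < L then js ! Suc k else js ! 0 + K)" for k
  define gap where "gap k = (\<Sum>j\<in>{js ! k<..<nxt k}. f j)" for k
  have gm: "gap_mean P s n k = gap k" for k
    unfolding gap_mean_def gap_def nxt_def f_def Let_def js_def[symmetric] K_def[symmetric] Ljs ..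
  have nxt_gt: "js ! k < nxt k" if "k < L" for k
  proof (cases "Suc k < L")
    case True then show ?thesis unfolding nxt_def using lt[of k "Suc k"] by simp
  next
    case False then show ?thesis unfolding nxt_def using mem[OF that] by simp
  qed
  have claim: "(\<Sum>j\<in>{js ! 0<..<nxt k}. f j) = (\<Sum>i<Suc k. gap i) + real k * s n" if "k < L" for k
    using that
  proof (induction k)
    case 0 then show ?case by (simp add: gap_def)
  next
    case (Suc k)
    have nk: "nxt k = js ! Suc k" unfolding nxt_def using Suc.prems by simp
    have a: "js ! 0 < js ! Suc k" using lt[of 0 "Suc k"] Suc.prems by simp
    have c: "js ! Suc k < nxt (Suc k)" using nxt_gt Suc.prems by simp
    have fb: "f (js ! Suc k) = s n" unfolding f_def using mem[OF Suc.prems] by simp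
    have "(\<Sum>j\<in>{js ! 0<..<nxt (Suc k)}. f j)
          = (\<Sum>j\<in>{js ! 0<..<js ! Suc k}. f j) + f (js ! Suc k) + (\<Sum>j\<in>{js ! Suc k<..<nxt (Suc k)}. f j)"
      by (rule interval_split3[OF a c])
    also have "(\<Sum>j\<in>{js ! 0<..<js ! Suc k}. f j) = (\<Sum>i<Suc k. gap i) + real k * s n"
      using Suc.IH Suc.prems nk by simp
    finally show ?case using fb by (simp add: gap_def algebra_simps)
  qed
  have lastn: "nxt (L - 1) = js ! 0 + K" unfolding nxt_def using L1 by simp
  have c1: "(\<Sum>j\<in>{js ! 0<..<js ! 0 + K}. f j) = (\<Sum>i<L. gap i) + real (L - 1) * s n"
    using claim[of "L - 1"] L1 lastn by simp
  have c2: "(\<Sum>j\<in>{js ! 0<..<js ! 0 + K}. f j) = (\<Sum>j<K. s (P ! j)) - s n"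
  proof -
    have "(\<Sum>j\<in>{js ! 0..<js ! 0 + K}. f j) = (\<Sum>j<K. s (P ! j))"
      unfolding f_def by (rule periodic_window[OF K0, of "\<lambda>j. s (P ! j)"])
    moreover have "(\<Sum>j\<in>{js ! 0..<js ! 0 + K}. f j) = f (js ! 0) + (\<Sum>j\<in>{js ! 0<..<js ! 0 + K}. f j)"
      using K0 by (intro sum_ivl_first') simp
    moreover have "f (js ! 0) = s n" unfolding f_def using mem[of 0] L1 by simp
    ultimately show ?thesis by simp
  qed
  have "(\<Sum>k=1..L. gap_mean P s n (k - 1)) = (\<Sum>i<L. gap i)"
    unfolding gm by (rule sum_shift1)
  also have "\<dots> = (\<Sum>j<K. s (P ! j)) - s n - real (L - 1) * s n" using c1 c2 by simp
  also have "\<dots> = (\<Sum>j<K. s (P ! j)) - real L * s n" using L1 by (simp add: of_nat_diff algebra_simps)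
  finally show ?thesis unfolding L_def K_def .
qed

lemma sum_pattern:
  assumes "\<forall>k<length P. P ! k \<in> {1..N}"
  shows "(\<Sum>j<length P. s (P ! j)) = (\<Sum>m\<in>{1..N}. real (alpha P m) * s m)"
proof -
  have "(\<Sum>j<length P. s (P ! j)) = (\<Sum>j<length P. \<Sum>m\<in>{1..N}. if P ! j = m then s m else 0)"
    using assms by (intro sum.cong) (auto simp: sum.delta)
  also have "\<dots> = (\<Sum>m\<in>{1..N}. \<Sum>j<length P. if P ! j = m then s m else 0)"
    by (rule sum.swap)
  also have "\<dots> = (\<Sum>m\<in>{1..N}. real (alpha P m) * s m)"
  proof (intro sum.cong refl)
    fix m
    have "(\<Sum>j<length P. if P ! j = m then s m else 0) = (\<Sum>j<length P. of_bool (P ! j = m)) * s m"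
      unfolding sum_distrib_right by (intro sum.cong) auto
    also have "(\<Sum>j<length P. (of_bool (P ! j = m) :: real)) = real (card ({..<length P} \<inter> {j. P ! j = m}))"
      by simp
    also have "{..<length P} \<inter> {j. P ! j = m} = {j. j < length P \<and> P ! j = m}" by auto
    also have "card \<dots> = alpha P m" unfolding alpha_def length_filter_conv_card by simp
    finally show "(\<Sum>j<length P. if P ! j = m then s m else 0) = real (alpha P m) * s m" .
  qed
  finally show ?thesis .
qed

lemma sum_pos:
  fixes F :: "nat \<Rightarrow> real"
  shows "(\<Sum>j<length P. of_bool (P ! j = n) * F (P ! j)) = real (alpha P n) * F n"
proof -
  have "(\<Sum>j<length P. of_bool (P ! j = n) * F (P ! j)) = (\<Sum>j<length P. of_bool (P ! j = n)) * F n"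
    unfolding sum_distrib_right by (intro sum.cong) auto
  also have "(\<Sum>j<length P. (of_bool (P ! j = n) :: real)) = real (card ({..<length P} \<inter> {j. P ! j = n}))"
    by simp
  also have "{..<length P} \<inter> {j. P ! j = n} = {j. j < length P \<and> P ! j = n}" by auto
  also have "card \<dots> = alpha P n" unfolding alpha_def length_filter_conv_card by simp
  finally show ?thesis .
qed

theorem mainTheorem7:
  fixes M :: "'a measure" and N n :: nat and P :: "nat list"
    and S :: "nat \<Rightarrow> 'a \<Rightarrow> real" and D :: "nat \<Rightarrow> 'a \<Rightarrow> bool"
    and s p :: "nat \<Rightarrow> real"
  assumes "prob_space M"
    and "\<forall>k<length P. P ! k \<in> {1..N}"
    and "\<forall>m\<in>{1..N}. alpha P m \<ge> 1"
    and "\<forall>t. S t \<in> borel_measurable M"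
    and "\<forall>t. D t \<in> measurable M (count_space UNIV)"
    and "prob_space.indep_vars M (\<lambda>_. borel)
           (\<lambda>i \<omega>. case i of Inl t \<Rightarrow> S t \<omega> | Inr t \<Rightarrow> of_bool (D t \<omega>)) (UNIV :: (nat + nat) set)"
    and "\<forall>t t'. P ! (t mod length P) = P ! (t' mod length P) \<longrightarrow>
           distr M borel (S t) = distr M borel (S t')"
    and "\<forall>t. integrable M (S t) \<and> integrable M (\<lambda>\<omega>. (S t \<omega>)^2)"
    and "\<forall>t. integral\<^sup>L M (S t) = s (P ! (t mod length P))"
    and "\<forall>m\<in>{1..N}. 0 \<le> p m \<and> p m < 1"
    and "\<forall>t. measure M {\<omega>\<in>space M. \<not> D t \<omega>} = p (P ! (t mod length P))"
    and "\<forall>m\<in>{1..N}. s m > 0"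
    and "n \<in> {1..N}"
  shows "(AE \<omega> in M. (\<lambda>K'. (\<Sum>k=1..K'. Stilde P S D n k \<omega>) / real K')
            \<longlonglongrightarrow> (1 / (1 - p n)) * (p n * s n
                 + (1 / real (alpha P n)) * (\<Sum>k=1..alpha P n. gap_mean P s n (k - 1))))
       \<and> (1 / (1 - p n)) * (p n * s n
                 + (1 / real (alpha P n)) * (\<Sum>k=1..alpha P n. gap_mean P s n (k - 1)))
         = (1 / (1 - p n)) * (p n * s n
                 + (1 / real (alpha P n)) * (\<Sum>m\<in>{1..N} - {n}. real (alpha P m) * s m))
       \<and> (1 / (1 - p n)) * (p n * s n
                 + (1 / real (alpha P n)) * (\<Sum>k=1..alpha P n. gap_mean P s n (k - 1)))
         = s n / ((1 - p n) * (real (alpha P n) * s n / (\<Sum>m=1..N. real (alpha P m) * s m))) - s n"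
proof -
  interpret prob_space M by fact
  note a = assms
  define L where "L = alpha P n"
  define G where "G = (\<Sum>j<length P. s (P ! j))"
  define u where "u = 1 - p n"
  have L1: "L \<ge> 1" using a(3) a(13) unfolding L_def by auto
  have K0: "length P > 0"
  proof -
    have "L \<le> length P" unfolding L_def alpha_def by simp
    then show ?thesis using L1 by linarith
  qed
  have u0: "u > 0" using a(10) a(13) unfolding u_def by auto
  have sn: "s n > 0" using a(12) a(13) by auto
  have GN: "G = (\<Sum>m\<in>{1..N}. real (alpha P m) * s m)" unfolding G_def by (rule sum_pattern[OF a(2)])
  have Gpos: "G > 0"
  proof -
    have "real (alpha P n) * s n > 0" using L1 sn unfolding L_def by simp
    moreover have "(\<Sum>m\<in>{1..N}. real (alpha P m) * s m) \<ge> real (alpha P n) * s n"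
    proof -
      have nn: "\<And>x. x \<in> {1..N} \<Longrightarrow> 0 \<le> real (alpha P x) * s x"
      proof -
        fix x assume "x \<in> {1..N}"
        then have "s x > 0" using a(12) by auto
        then show "0 \<le> real (alpha P x) * s x" by (intro mult_nonneg_nonneg) auto
      qed
      show ?thesis by (intro member_le_sum) (use nn a(13) in auto)
    qed
    ultimately show ?thesis unfolding GN by linarith
  qed
  have GS: "(\<Sum>k=1..alpha P n. gap_mean P s n (k - 1)) = G - real L * s n"
    unfolding G_def L_def by (rule gap_sum) (use L1 L_def in simp)
  have Gm: "(\<Sum>m\<in>{1..N} - {n}. real (alpha P m) * s m) = G - real L * s n"
    unfolding GN L_def using a(13) by (simp add: sum_diff1)
  have target: "(1 / (1 - p n)) * (p n * s n + (1 / real (alpha P n)) * (\<Sum>k=1..alpha P n. gap_mean P s n (k - 1)))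
      = G / (real L * u) - s n"
    unfolding GS unfolding L_def[symmetric] u_def[symmetric] using L1 u0 unfolding u_def
    by (simp add: field_simps)
  have conj3: "G / (real L * u) - s n = s n / ((1 - p n) * (real (alpha P n) * s n / (\<Sum>m=1..N. real (alpha P m) * s m))) - s n"
    unfolding GN[symmetric] L_def[symmetric] u_def[symmetric] using L1 u0 sn Gpos
    by (simp add: field_simps)
  have Smeas: "\<And>t. S t \<in> borel_measurable M" using a(4) by auto
  have Dmeas: "\<And>t. D t \<in> measurable M (count_space UNIV)" using a(5) by auto
  have ind: "indep_vars (\<lambda>_. borel) (\<lambda>i \<omega>. case i of Inl t \<Rightarrow> S t \<omega> | Inr t \<Rightarrow> of_bool (D t \<omega>)) UNIV"
    using a(6) .
  have Sint: "\<And>t. integrable M (S t)" using a(8) by auto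
  have Sint2: "\<And>t. integrable M (\<lambda>\<omega>. (S t \<omega>)^2)" using a(8) by auto
  have pD: "\<And>t. prob {\<omega>\<in>space M. \<not> D t \<omega>} = p (P ! (t mod length P))" using a(11) by auto
  note app = slln_app[OF K0 Smeas Dmeas ind a(7) Sint Sint2 pD]
  have gp: "(\<lambda>x::real. max x 0) \<in> borel_measurable borel" by measurable
  have gn: "(\<lambda>x::real. max (- x) 0) \<in> borel_measurable borel" by measurable
  have g1: "(\<lambda>x::real. 1::real) \<in> borel_measurable borel" by measurable
  have gp0: "\<And>x::real. 0 \<le> max x 0" and gp1: "\<And>x::real. max x 0 \<le> \<bar>x\<bar> + 1" by auto
  have gn0: "\<And>x::real. 0 \<le> max (- x) 0" and gn1: "\<And>x::real. max (- x) 0 \<le> \<bar>x\<bar> + 1" by auto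
  have g10: "\<And>x::real. (0::real) \<le> 1" and g11: "\<And>x::real. (1::real) \<le> \<bar>x\<bar> + 1" by auto
  have c1: "\<And>j::nat. (0::real) \<le> 1" by simp
  have cpos: "\<And>j. (0::real) \<le> of_bool (P ! j = n)" by simp
  define mp where "mp j = expectation (\<lambda>\<omega>. max (S j \<omega>) 0)" for j
  define mn where "mn j = expectation (\<lambda>\<omega>. max (- S j \<omega>) 0)" for j
  have mpn: "mp j - mn j = s (P ! j)" if "j < length P" for j
  proof -
    have i1: "integrable M (\<lambda>\<omega>. max (S j \<omega>) 0)" "integrable M (\<lambda>\<omega>. max (- S j \<omega>) 0)"
      using Sint[of j] by auto
    have "mp j - mn j = expectation (\<lambda>\<omega>. max (S j \<omega>) 0 - max (- S j \<omega>) 0)"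
      unfolding mp_def mn_def using i1 by (simp add: Bochner_Integration.integral_diff)
    also have "(\<lambda>\<omega>. max (S j \<omega>) 0 - max (- S j \<omega>) 0) = S j" by (auto simp: max_def fun_eq_iff)
    also have "expectation (S j) = s (P ! j)" using a(9) that by simp
    finally show ?thesis .
  qed
  have h1: "AE \<omega> in M. (\<lambda>T. (\<Sum>t<T. max (S t \<omega>) 0) / real T) \<longlonglongrightarrow> (\<Sum>j<length P. mp j) / real (length P)"
    using app[OF gp gp0 gp1 c1, of 1 1] unfolding mp_def by simp
  have h2: "AE \<omega> in M. (\<lambda>T. (\<Sum>t<T. max (- S t \<omega>) 0) / real T) \<longlonglongrightarrow> (\<Sum>j<length P. mn j) / real (length P)"
    using app[OF gn gn0 gn1 c1, of 1 1] unfolding mn_def by simp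
  note h3r = app[where c="\<lambda>j. of_bool (P ! j = n)" and a=1 and b=0, OF g1 g10 g11 cpos zero_le_one order.refl order.refl zero_le_one]
  note h4r = app[where c="\<lambda>j. of_bool (P ! j = n)" and a=1 and b=0, OF gp gp0 gp1 cpos zero_le_one order.refl order.refl zero_le_one]
  note h5r = app[where c="\<lambda>j. of_bool (P ! j = n)" and a=1 and b=0, OF gn gn0 gn1 cpos zero_le_one order.refl order.refl zero_le_one]
  have lim: "AE \<omega> in M. (\<lambda>K'. (\<Sum>k=1..K'. Stilde P S D n k \<omega>) / real K') \<longlonglongrightarrow> G / (real L * u) - s n"
    using h1 h2 h3r h4r h5r
  proof eventually_elim
    case (elim \<omega>)
    define Ev where "Ev = succ_set P D n \<omega>"
    define K where "K = length P"
    have Kr: "real K > 0" using K0 unfolding K_def by simp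
    have Lr: "real L > 0" using L1 by simp
    have eqC: "(\<Sum>t<T. of_bool (P ! (t mod length P) = n) * (1 * (if D t \<omega> then 1 else 0)))
        = (\<Sum>t<T. (of_bool (t \<in> Ev) :: real))" for T
      by (intro sum.cong) (auto simp: Ev_def succ_set_def)
    have cC: "(\<Sum>j<length P. of_bool (P ! j = n) * (expectation (\<lambda>\<omega>. 1) * (1 * (1 - p (P ! j)) + 0 * p (P ! j))))
        = real L * u"
    proof -
      have "(\<Sum>j<length P. of_bool (P ! j = n) * (expectation (\<lambda>\<omega>. 1) * (1 * (1 - p (P ! j)) + 0 * p (P ! j))))
          = (\<Sum>j<length P. of_bool (P ! j = n) * (\<lambda>m. 1 - p m) (P ! j))"
        by (simp add: prob_space)
      also have "\<dots> = real (alpha P n) * (1 - p n)" by (rule sum_pos)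
      finally show ?thesis unfolding L_def u_def .
    qed
    have hC: "(\<lambda>T. (\<Sum>t<T. (of_bool (t \<in> Ev) :: real)) / real T) \<longlonglongrightarrow> real L * u / real K"
      using elim(3) unfolding eqC cC K_def .
    have eqA: "(\<Sum>t<T. max (S t \<omega>) 0) / real T - (\<Sum>t<T. max (- S t \<omega>) 0) / real T
        = (\<Sum>t<T. S t \<omega>) / real T" for T
    proof -
      have "(\<Sum>t<T. max (S t \<omega>) 0) - (\<Sum>t<T. max (- S t \<omega>) 0) = (\<Sum>t<T. S t \<omega>)"
        unfolding sum_subtractf[symmetric] by (intro sum.cong) (auto simp: max_def)
      then show ?thesis by (simp add: diff_divide_distrib[symmetric])
    qed
    have cA: "(\<Sum>j<length P. mp j) / real (length P) - (\<Sum>j<length P. mn j) / real (length P) = G / real K"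
    proof -
      have "(\<Sum>j<length P. mp j) - (\<Sum>j<length P. mn j) = G"
        unfolding sum_subtractf[symmetric] G_def by (intro sum.cong) (auto simp: mpn)
      then show ?thesis unfolding K_def by (simp add: diff_divide_distrib[symmetric])
    qed
    have hA: "(\<lambda>T. (\<Sum>t<T. S t \<omega>) / real T) \<longlonglongrightarrow> G / real K"
      using tendsto_diff[OF elim(1) elim(2)] unfolding eqA cA .
    have eqB: "(\<Sum>t<T. of_bool (P ! (t mod length P) = n) * (max (S t \<omega>) 0 * (if D t \<omega> then 1 else 0))) / real T
        - (\<Sum>t<T. of_bool (P ! (t mod length P) = n) * (max (- S t \<omega>) 0 * (if D t \<omega> then 1 else 0))) / real T
        = (\<Sum>t<T. of_bool (t \<in> Ev) * S t \<omega>) / real T" for T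
    proof -
      have "(\<Sum>t<T. of_bool (P ! (t mod length P) = n) * (max (S t \<omega>) 0 * (if D t \<omega> then 1 else 0)))
        - (\<Sum>t<T. of_bool (P ! (t mod length P) = n) * (max (- S t \<omega>) 0 * (if D t \<omega> then 1 else 0)))
        = (\<Sum>t<T. of_bool (t \<in> Ev) * S t \<omega>)"
        unfolding sum_subtractf[symmetric] by (intro sum.cong) (auto simp: max_def Ev_def succ_set_def)
      then show ?thesis by (simp add: diff_divide_distrib[symmetric])
    qed
    have cB: "(\<Sum>j<length P. of_bool (P ! j = n) * (expectation (\<lambda>\<omega>. max (S j \<omega>) 0) * (1 * (1 - p (P ! j)) + 0 * p (P ! j)))) / real (length P)
        - (\<Sum>j<length P. of_bool (P ! j = n) * (expectation (\<lambda>\<omega>. max (- S j \<omega>) 0) * (1 * (1 - p (P ! j)) + 0 * p (P ! j)))) / real (length P)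
        = real L * (s n * u) / real K"
    proof -
      have "(\<Sum>j<length P. of_bool (P ! j = n) * (expectation (\<lambda>\<omega>. max (S j \<omega>) 0) * (1 * (1 - p (P ! j)) + 0 * p (P ! j))))
        - (\<Sum>j<length P. of_bool (P ! j = n) * (expectation (\<lambda>\<omega>. max (- S j \<omega>) 0) * (1 * (1 - p (P ! j)) + 0 * p (P ! j))))
        = (\<Sum>j<length P. of_bool (P ! j = n) * (\<lambda>m. s m * (1 - p m)) (P ! j))"
        unfolding sum_subtractf[symmetric]
      proof (intro sum.cong refl)
        fix j assume "j \<in> {..<length P}"
        then have "mp j - mn j = s (P ! j)" using mpn by simp
        then show "of_bool (P ! j = n) * (expectation (\<lambda>\<omega>. max (S j \<omega>) 0) * (1 * (1 - p (P ! j)) + 0 * p (P ! j)))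
          - of_bool (P ! j = n) * (expectation (\<lambda>\<omega>. max (- S j \<omega>) 0) * (1 * (1 - p (P ! j)) + 0 * p (P ! j)))
          = of_bool (P ! j = n) * (\<lambda>m. s m * (1 - p m)) (P ! j)"
          unfolding mp_def mn_def by (simp add: algebra_simps)
      qed
      also have "\<dots> = real (alpha P n) * (s n * (1 - p n))" by (rule sum_pos)
      finally show ?thesis unfolding L_def u_def K_def by (simp add: diff_divide_distrib[symmetric])
    qed
    have hB: "(\<lambda>T. (\<Sum>t<T. of_bool (t \<in> Ev) * S t \<omega>) / real T) \<longlonglongrightarrow> real L * (s n * u) / real K"
      using tendsto_diff[OF elim(4) elim(5)] unfolding eqB cB .
    have gpos: "real L * u / real K > 0" using Kr Lr u0 by simp
    have R: "(\<lambda>K'. (\<Sum>k=1..K'. \<Sum>t\<in>{enumerate Ev (k - 1)<..<enumerate Ev k}. S t \<omega>) / real K')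
           \<longlonglongrightarrow> (G / real K) / (real L * u / real K) - (real L * (s n * u) / real K) / (real L * u / real K)"
      by (rule renewal[OF hA hC gpos hB])
    have val: "(G / real K) / (real L * u / real K) - (real L * (s n * u) / real K) / (real L * u / real K)
        = G / (real L * u) - s n"
      using Kr Lr u0 by (simp add: field_simps)
    show ?case using R unfolding val Ev_def Stilde_def .
  qed
  show ?thesis
  proof (intro conjI)
    show "AE \<omega> in M. (\<lambda>K'. (\<Sum>k=1..K'. Stilde P S D n k \<omega>) / real K')
            \<longlonglongrightarrow> (1 / (1 - p n)) * (p n * s n
                 + (1 / real (alpha P n)) * (\<Sum>k=1..alpha P n. gap_mean P s n (k - 1)))"
      unfolding target by (rule lim)
    show "(1 / (1 - p n)) * (p n * s n
                 + (1 / real (alpha P n)) * (\<Sum>k=1..alpha P n. gap_mean P s n (k - 1)))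
         = (1 / (1 - p n)) * (p n * s n
                 + (1 / real (alpha P n)) * (\<Sum>m\<in>{1..N} - {n}. real (alpha P m) * s m))"
      by (simp only: GS Gm)
    show "(1 / (1 - p n)) * (p n * s n
                 + (1 / real (alpha P n)) * (\<Sum>k=1..alpha P n. gap_mean P s n (k - 1)))
         = s n / ((1 - p n) * (real (alpha P n) * s n / (\<Sum>m=1..N. real (alpha P m) * s m))) - s n"
      unfolding target by (rule conj3)
  qed
qed

end
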